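(* Let $D\subset\mathbb{C}^n$ be a piecewise smooth complete circular domain such that for each $\zeta\in bD$, the radial line from $0$ to $\zeta$ meets each face of $bD$ which passes through $\zeta$ transversally. Then the standard and the radial boundary distances on $D$ are comparable: there is a constant $C>1$ such that $\rho(w)\le C\,d(w)$ for all $w\in D$.
   Context: A piecewise smooth domain is an intersection $D=\bigcap_{j=1}^N D_j$ of finitely many bounded domains with $\mathcal{C}^\infty$-smooth boundary in which all boundary intersections are transverse. A face of $bD$ is a connected component of the set of boundary points lying on exactly one of the $bD_j$. $D$ is complete circular if $\lambda z\in D$ for all $z\in D$ and $|\lambda|\le1$. For $w\in D$, $d(w)=\mathrm{dist}(w,bD)$ is the standard boundary distance, and the radial boundary distance is $\rho(w)=|w^*-w|$, where $w^*$ is the unique point of $bD$ collinear with $0$ and $w$ on the ray from $0$ through $w$. *)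

theory Defs
  imports "HOL-Analysis.Analysis"
begin

fun iter_dderiv :: "('a::real_normed_vector \<Rightarrow> real) \<Rightarrow> 'a list \<Rightarrow> 'a \<Rightarrow> real" where
  "iter_dderiv f [] = f"
| "iter_dderiv f (v # vs) = (\<lambda>z. frechet_derivative (iter_dderiv f vs) (at z) v)"

definition smooth_inf :: "('a::real_normed_vector \<Rightarrow> real) \<Rightarrow> bool" where
  "smooth_inf f \<longleftrightarrow> (\<forall>vs z. iter_dderiv f vs differentiable (at z))"

definition grad :: "('a::euclidean_space \<Rightarrow> real) \<Rightarrow> 'a \<Rightarrow> 'a" where
  "grad f z = (\<Sum>b\<in>Basis. frechet_derivative f (at z) b *\<^sub>R b)"

definition smooth_bdry_domain :: "('a::euclidean_space) set \<Rightarrow> ('a \<Rightarrow> real) \<Rightarrow> bool" where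
  "smooth_bdry_domain U r \<longleftrightarrow> U = {z. r z < 0} \<and> bounded U \<and> connected U \<and> U \<noteq> {}
     \<and> smooth_inf r \<and> (\<forall>z. r z = 0 \<longrightarrow> grad r z \<noteq> 0)"

definition piecewise_smooth_domain ::
  "('a::euclidean_space) set \<Rightarrow> nat \<Rightarrow> (nat \<Rightarrow> 'a set) \<Rightarrow> (nat \<Rightarrow> 'a \<Rightarrow> real) \<Rightarrow> bool" where
  "piecewise_smooth_domain D N Ds r \<longleftrightarrow> 0 < N \<and> D = (\<Inter>j<N. Ds j)
     \<and> (\<forall>j<N. smooth_bdry_domain (Ds j) (r j))
     \<and> (\<forall>z J c. J \<subseteq> {..<N} \<and> (\<forall>j\<in>J. z \<in> frontier (Ds j))
            \<and> (\<Sum>j\<in>J. c j *\<^sub>R grad (r j) z) = 0 \<longrightarrow> (\<forall>j\<in>J. c j = 0))"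

definition one_face_pts :: "('a::euclidean_space) set \<Rightarrow> nat \<Rightarrow> (nat \<Rightarrow> 'a set) \<Rightarrow> 'a set" where
  "one_face_pts D N Ds = {z \<in> frontier D. card {j. j < N \<and> z \<in> frontier (Ds j)} = 1}"

definition is_face :: "('a::euclidean_space) set \<Rightarrow> nat \<Rightarrow> (nat \<Rightarrow> 'a set) \<Rightarrow> 'a set \<Rightarrow> bool" where
  "is_face D N Ds F \<longleftrightarrow> (\<exists>x\<in>one_face_pts D N Ds. F = connected_component_set (one_face_pts D N Ds) x)"

definition complete_circular :: "(complex ^ 'n) set \<Rightarrow> bool" where
  "complete_circular D \<longleftrightarrow> (\<forall>z\<in>D. \<forall>c::complex. cmod c \<le> 1 \<longrightarrow> c *s z \<in> D)"

definition bdist :: "('a::euclidean_space) set \<Rightarrow> 'a \<Rightarrow> real" where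
  "bdist D w = infdist w (frontier D)"

text \<open>Radial boundary distance rho(w) = |w* - w|, w* the unique point of bD on the
  ray from 0 through w (w nonzero).\<close>
definition radial_bdist :: "('a::euclidean_space) set \<Rightarrow> 'a \<Rightarrow> real" where
  "radial_bdist D w = norm ((THE z. z \<in> frontier D \<and> (\<exists>t>0. z = t *\<^sub>R w)) - w)"

end

theory Submission
  imports Defs
begin

lemma lin_bound:
  fixes L :: "'a::euclidean_space \<Rightarrow> real"
  assumes "linear L"
  shows "\<bar>L v\<bar> \<le> norm v * (\<Sum>b\<in>Basis. \<bar>L b\<bar>)"
proof -
  have "L v = L (\<Sum>b\<in>Basis. (v \<bullet> b) *\<^sub>R b)" by (simp add: euclidean_representation)
  also have "\<dots> = (\<Sum>b\<in>Basis. (v \<bullet> b) * L b)"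
    using assms by (simp add: linear_sum linear_scale)
  finally have eq: "L v = (\<Sum>b\<in>Basis. (v \<bullet> b) * L b)" .
  have "\<bar>L v\<bar> \<le> (\<Sum>b\<in>Basis. \<bar>(v \<bullet> b) * L b\<bar>)"
    unfolding eq by (rule sum_abs)
  also have "\<dots> = (\<Sum>b\<in>Basis. \<bar>v \<bullet> b\<bar> * \<bar>L b\<bar>)"
    by (simp add: abs_mult)
  also have "\<dots> \<le> (\<Sum>b\<in>Basis. norm v * \<bar>L b\<bar>)"
    by (intro sum_mono mult_right_mono) (auto simp: Basis_le_norm)
  finally show ?thesis by (simp add: sum_distrib_left)
qed

definition C1 :: "('a::euclidean_space \<Rightarrow> real) \<Rightarrow> bool" where
  "C1 f \<longleftrightarrow> (\<forall>z. f differentiable (at z)) \<and> (\<forall>v. continuous_on UNIV (\<lambda>z. frechet_derivative f (at z) v))"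

lemma smooth_C1: "smooth_inf f \<Longrightarrow> C1 f"
proof -
  assume s: "smooth_inf f"
  have "iter_dderiv f [] differentiable (at z)" for z using s unfolding smooth_inf_def by blast
  moreover have "iter_dderiv f [v] differentiable (at z)" for v z using s unfolding smooth_inf_def by blast
  hence "continuous_on UNIV (\<lambda>z. frechet_derivative f (at z) v)" for v
    by (auto intro!: continuous_at_imp_continuous_on differentiable_imp_continuous_within)
  ultimately show ?thesis unfolding C1_def by auto
qed

lemma C1_hasd: "C1 f \<Longrightarrow> (f has_derivative frechet_derivative f (at z)) (at z)"
  unfolding C1_def using frechet_derivative_works by blast

lemma C1_lin: "C1 f \<Longrightarrow> linear (frechet_derivative f (at z))"
  unfolding C1_def using linear_frechet_derivative by blast

lemma C1_cont: "C1 f \<Longrightarrow> continuous_on UNIV f"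
  unfolding C1_def by (auto intro!: continuous_at_imp_continuous_on differentiable_imp_continuous_within)

lemma C1_grad: "C1 f \<Longrightarrow> frechet_derivative f (at z) v = grad f z \<bullet> v"
proof -
  assume c: "C1 f"
  have "frechet_derivative f (at z) v = frechet_derivative f (at z) (\<Sum>b\<in>Basis. (v \<bullet> b) *\<^sub>R b)"
    by (simp add: euclidean_representation)
  also have "\<dots> = (\<Sum>b\<in>Basis. (v \<bullet> b) * frechet_derivative f (at z) b)"
    using C1_lin[OF c] by (simp add: linear_sum linear_scale)
  also have "\<dots> = grad f z \<bullet> v" unfolding grad_def
    by (simp add: inner_sum_left inner_sum_right mult.commute inner_commute)
  finally show ?thesis .
qed

lemma C1_line:
  assumes "C1 f"
  shows "((\<lambda>t. f (x + t *\<^sub>R v)) has_real_derivative frechet_derivative f (at (x + t *\<^sub>R v)) v) (at t)"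
proof -
  have l: "linear (frechet_derivative f (at (x + t *\<^sub>R v)))" using C1_lin[OF assms] .
  have "((\<lambda>t. x + t *\<^sub>R v) has_derivative (\<lambda>h. h *\<^sub>R v)) (at t)"
    by (auto intro!: derivative_eq_intros)
  from diff_chain_at[OF this C1_hasd[OF assms, of "x + t *\<^sub>R v"]]
  have "((\<lambda>t. f (x + t *\<^sub>R v)) has_derivative (\<lambda>h. frechet_derivative f (at (x + t *\<^sub>R v)) (h *\<^sub>R v))) (at t)"
    by (simp add: o_def)
  moreover have "(\<lambda>h. frechet_derivative f (at (x + t *\<^sub>R v)) (h *\<^sub>R v)) = (\<lambda>h. h * frechet_derivative f (at (x + t *\<^sub>R v)) v)"
    using l by (simp add: linear_scale)
  ultimately show ?thesis by (intro has_derivative_imp_has_field_derivative) auto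
qed

lemma C1_SD:
  assumes c: "C1 f" and e: "\<epsilon> > 0"
  shows "\<exists>\<delta>>0. \<forall>x y. x \<in> ball z \<delta> \<longrightarrow> y \<in> ball z \<delta> \<longrightarrow>
           \<bar>f y - f x - frechet_derivative f (at z) (y - x)\<bar> \<le> \<epsilon> * norm (y - x)"
proof -
  let ?D = "\<lambda>\<xi> v. frechet_derivative f (at \<xi>) v"
  define g where "g \<xi> = (\<Sum>b\<in>Basis. \<bar>?D \<xi> b - ?D z b\<bar>)" for \<xi>
  have "continuous_on UNIV g" unfolding g_def using c unfolding C1_def
    by (intro continuous_intros) auto
  hence "isCont g z" by (simp add: continuous_on_eq_continuous_at)
  moreover have "g z = 0" by (simp add: g_def)
  ultimately obtain \<delta> where d: "\<delta> > 0" "\<And>\<xi>. dist \<xi> z < \<delta> \<Longrightarrow> dist (g \<xi>) 0 < \<epsilon>"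
    using e unfolding continuous_at_eps_delta by force
  show ?thesis
  proof (intro exI[of _ \<delta>] conjI allI impI d(1))
    fix x y assume x: "x \<in> ball z \<delta>" and y: "y \<in> ball z \<delta>"
    show "\<bar>f y - f x - ?D z (y - x)\<bar> \<le> \<epsilon> * norm (y - x)"
    proof -
      obtain t where t: "0 < t" "t < 1" "f (x + 1 *\<^sub>R (y - x)) - f (x + 0 *\<^sub>R (y - x)) = (1 - 0) * ?D (x + t *\<^sub>R (y - x)) (y - x)"
        using MVT2[of 0 1 "\<lambda>t. f (x + t *\<^sub>R (y - x))" "\<lambda>t. ?D (x + t *\<^sub>R (y - x)) (y - x)"]
        using C1_line[OF c] by auto
      define \<xi> where "\<xi> = x + t *\<^sub>R (y - x)"
      have "\<xi> = (1 - t) *\<^sub>R x + t *\<^sub>R y" by (simp add: \<xi>_def algebra_simps)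
      hence "\<xi> \<in> ball z \<delta>" using convexD[OF convex_ball x y, of "1-t" t] t by auto
      hence gl: "g \<xi> < \<epsilon>" using d(2)[of \<xi>] by (simp add: dist_commute)
      have fe: "f y - f x = ?D \<xi> (y - x)" using t by (simp add: \<xi>_def)
      have lin: "linear (\<lambda>v. ?D \<xi> v - ?D z v)"
        using C1_lin[OF c, of \<xi>] C1_lin[OF c, of z] by (intro linear_compose_sub) auto
      have "\<bar>?D \<xi> (y - x) - ?D z (y - x)\<bar> \<le> norm (y - x) * g \<xi>"
        using lin_bound[OF lin, of "y - x"] by (simp add: g_def)
      also have "\<dots> \<le> \<epsilon> * norm (y - x)" using gl by (simp add: mult.commute mult_right_mono less_imp_le)
      finally show ?thesis using fe by simp
    qed
  qed
qed



lemma finite_ex_min: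
  assumes "finite A" and "\<And>i. i \<in> A \<Longrightarrow> \<exists>d>0. \<forall>d'. 0 < d' \<and> d' \<le> d \<longrightarrow> P i d'"
  shows "\<exists>d>(0::real). \<forall>d'. 0 < d' \<and> d' \<le> d \<longrightarrow> (\<forall>i\<in>A. P i d')"
  using assms
proof (induction A rule: finite_induct)
  case empty then show ?case by (intro exI[of _ 1]) auto
next
  case (insert a A)
  then obtain d1 where d1: "d1 > 0" "\<forall>d'. 0 < d' \<and> d' \<le> d1 \<longrightarrow> (\<forall>i\<in>A. P i d')" by blast
  obtain d2 where d2: "d2 > 0" "\<forall>d'. 0 < d' \<and> d' \<le> d2 \<longrightarrow> P a d'" using insert.prems by blast
  show ?case using d1 d2 by (intro exI[of _ "min d1 d2"]) auto
qed

locale PW =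
  fixes D :: "'a::euclidean_space set" and N :: nat and Ds :: "nat \<Rightarrow> 'a set" and r :: "nat \<Rightarrow> 'a \<Rightarrow> real"
  assumes pw: "piecewise_smooth_domain D N Ds r"
    and star: "\<And>z t. z \<in> D \<Longrightarrow> 0 \<le> t \<Longrightarrow> t \<le> 1 \<Longrightarrow> t *\<^sub>R z \<in> D"
    and transv: "\<And>\<zeta> F j. \<zeta> \<in> frontier D \<Longrightarrow> is_face D N Ds F \<Longrightarrow> \<zeta> \<in> closure F
                   \<Longrightarrow> j < N \<Longrightarrow> F \<subseteq> frontier (Ds j)
                   \<Longrightarrow> frechet_derivative (r j) (at \<zeta>) \<zeta> \<noteq> 0"
begin

lemma N_pos: "0 < N" using pw unfolding piecewise_smooth_domain_def by auto
lemma D_eq: "D = (\<Inter>j<N. Ds j)" using pw unfolding piecewise_smooth_domain_def by auto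
lemma sbd: "j < N \<Longrightarrow> smooth_bdry_domain (Ds j) (r j)" using pw unfolding piecewise_smooth_domain_def by auto
lemma Ds_eq: "j < N \<Longrightarrow> Ds j = {z. r j z < 0}" using sbd unfolding smooth_bdry_domain_def by auto
lemma C1r: "j < N \<Longrightarrow> C1 (r j)" using sbd smooth_C1 unfolding smooth_bdry_domain_def by auto
lemma grad_nz: "j < N \<Longrightarrow> r j z = 0 \<Longrightarrow> grad (r j) z \<noteq> 0" using sbd unfolding smooth_bdry_domain_def by auto
lemma indep: "J \<subseteq> {..<N} \<Longrightarrow> (\<forall>j\<in>J. z \<in> frontier (Ds j)) \<Longrightarrow> (\<Sum>j\<in>J. c j *\<^sub>R grad (r j) z) = 0 \<Longrightarrow> j \<in> J \<Longrightarrow> c j = 0"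
  using pw unfolding piecewise_smooth_domain_def by blast

lemma rcont: "j < N \<Longrightarrow> isCont (r j) z"
  using C1_cont[OF C1r] by (simp add: continuous_on_eq_continuous_at)

lemma open_Ds: "j < N \<Longrightarrow> open (Ds j)"
  using Ds_eq C1_cont[OF C1r] by (simp add: open_Collect_less continuous_on_const)

lemma open_D: "open D"
  unfolding D_eq using open_Ds by (intro open_INT) auto

lemma bounded_D: "bounded D"
proof -
  have "D \<subseteq> Ds 0" using D_eq N_pos by auto
  moreover have "bounded (Ds 0)" using sbd[OF N_pos] unfolding smooth_bdry_domain_def by auto
  ultimately show ?thesis using bounded_subset by blast
qed

lemma closure_D_le: "j < N \<Longrightarrow> z \<in> closure D \<Longrightarrow> r j z \<le> 0"
proof -
  assume j: "j < N" and z: "z \<in> closure D"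
  have "D \<subseteq> {z. r j z \<le> 0}" using D_eq Ds_eq[OF j] j by auto
  moreover have "closed {z. r j z \<le> 0}"
    using C1_cont[OF C1r[OF j]] by (simp add: closed_Collect_le continuous_on_const)
  ultimately have "closure D \<subseteq> {z. r j z \<le> 0}" by (rule closure_minimal)
  thus ?thesis using z by auto
qed

lemma frontier_Ds: "j < N \<Longrightarrow> frontier (Ds j) = {z. r j z = 0}"
proof -
  assume j: "j < N"
  have op: "open (Ds j)" using open_Ds[OF j] .
  have cl: "closure (Ds j) \<subseteq> {z. r j z \<le> 0}"
  proof (rule closure_minimal)
    show "Ds j \<subseteq> {z. r j z \<le> 0}" using Ds_eq[OF j] by auto
    show "closed {z. r j z \<le> 0}"
      using C1_cont[OF C1r[OF j]] by (simp add: closed_Collect_le continuous_on_const)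
  qed
  show ?thesis
  proof
    show "frontier (Ds j) \<subseteq> {z. r j z = 0}"
      using cl op Ds_eq[OF j] unfolding frontier_def interior_open[OF op] by fastforce
  next
    show "{z. r j z = 0} \<subseteq> frontier (Ds j)"
    proof
      fix z assume z: "z \<in> {z. r j z = 0}"
      define g where "g = grad (r j) z"
      have gnz: "g \<noteq> 0" using grad_nz[OF j] z by (simp add: g_def)
      have "frechet_derivative (r j) (at z) g = g \<bullet> g" using C1_grad[OF C1r[OF j]] by (simp add: g_def)
      hence pos: "frechet_derivative (r j) (at (z + 0 *\<^sub>R g)) g > 0" using gnz by simp
      obtain d where d: "d > 0" "\<And>h. h > 0 \<Longrightarrow> h < d \<Longrightarrow> r j (z + (0 - h) *\<^sub>R g) < r j (z + 0 *\<^sub>R g)"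
        using DERIV_pos_inc_left[OF C1_line[OF C1r[OF j], of z g 0] pos] by blast
      have "z \<in> closure (Ds j)"
        unfolding closure_approachable
      proof (intro allI impI)
        fix e :: real assume e: "e > 0"
        define h where "h = min (d/2) (e / (2 * norm g))"
        have h: "h > 0" "h < d" using d e gnz by (auto simp: h_def)
        have "r j (z - h *\<^sub>R g) < 0" using d(2)[OF h] z by simp
        moreover have "dist (z - h *\<^sub>R g) z < e"
        proof -
          have "dist (z - h *\<^sub>R g) z = h * norm g" using h by (simp add: dist_norm)
          also have "\<dots> \<le> e / (2 * norm g) * norm g" using gnz by (intro mult_right_mono) (auto simp: h_def)
          also have "\<dots> < e" using gnz e by (simp add: field_simps)
          finally show ?thesis .
        qed
        ultimately show "\<exists>y\<in>Ds j. dist y z < e" using Ds_eq[OF j] by blast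
      qed
      moreover have "z \<notin> Ds j" using Ds_eq[OF j] z by auto
      ultimately show "z \<in> frontier (Ds j)" unfolding frontier_def interior_open[OF op] by auto
    qed
  qed
qed

lemma frontier_D: "frontier D = closure D - D"
  unfolding frontier_def interior_open[OF open_D] ..

lemma star_closure: "z \<in> closure D \<Longrightarrow> 0 \<le> t \<Longrightarrow> t \<le> 1 \<Longrightarrow> t *\<^sub>R z \<in> closure D"
proof -
  assume z: "z \<in> closure D" and t: "0 \<le> t" "t \<le> 1"
  show ?thesis unfolding closure_approachable
  proof (intro allI impI)
    fix e :: real assume e: "e > 0"
    obtain y where y: "y \<in> D" "dist y z < e" using z e unfolding closure_approachable by blast
    have "dist (t *\<^sub>R y) (t *\<^sub>R z) = t * dist y z" using t by (simp add: dist_norm scaleR_diff_right[symmetric])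
    also have "\<dots> \<le> dist y z" using t by (simp add: mult_left_le_one_le)
    finally show "\<exists>x\<in>D. dist x (t *\<^sub>R z) < e" using y star[OF y(1) t] by (intro bexI[of _ "t *\<^sub>R y"]) auto
  qed
qed

lemma sign_nonneg:
  assumes z: "\<zeta> \<in> frontier D" and j: "j < N" and r0: "r j \<zeta> = 0"
  shows "frechet_derivative (r j) (at \<zeta>) \<zeta> \<ge> 0"
proof (rule ccontr)
  assume "\<not> ?thesis"
  hence neg: "frechet_derivative (r j) (at (0 + 1 *\<^sub>R \<zeta>)) \<zeta> < 0" by simp
  obtain d where d: "d > 0" "\<And>h. h > 0 \<Longrightarrow> h < d \<Longrightarrow> r j (0 + 1 *\<^sub>R \<zeta>) < r j (0 + (1 - h) *\<^sub>R \<zeta>)"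
    using DERIV_neg_dec_left[OF C1_line[OF C1r[OF j], of 0 \<zeta> 1] neg] by blast
  define h where "h = min (d/2) (1/2)"
  have h: "h > 0" "h < d" "h \<le> 1" using d by (auto simp: h_def)
  have "r j ((1 - h) *\<^sub>R \<zeta>) > 0" using d(2)[OF h(1,2)] r0 by simp
  moreover have "(1 - h) *\<^sub>R \<zeta> \<in> closure D"
    using z h by (intro star_closure) (auto simp: frontier_D)
  ultimately show False using closure_D_le[OF j] by fastforce
qed

end


lemma indep_inj:
  fixes g :: "nat \<Rightarrow> 'a::euclidean_space"
  assumes fin: "finite J" and ind: "\<And>c. (\<Sum>i\<in>J. c i *\<^sub>R g i) = 0 \<Longrightarrow> \<forall>i\<in>J. c i = 0"
  shows "inj_on g J"
proof (rule inj_onI, rule ccontr)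
  fix a b assume a: "a \<in> J" and b: "b \<in> J" and eq: "g a = g b" and ne: "a \<noteq> b"
  define c where "c i = (if i = a then 1 else 0) - (if i = b then 1 else (0::real))" for i
  have "(\<Sum>i\<in>J. c i *\<^sub>R g i) = (\<Sum>i\<in>J. (if i = a then g i else 0) - (if i = b then g i else 0))"
    by (intro sum.cong) (auto simp: c_def)
  also have "\<dots> = (\<Sum>i\<in>J. (if i = a then g i else 0)) - (\<Sum>i\<in>J. (if i = b then g i else 0))"
    by (rule sum_subtractf)
  also have "\<dots> = 0" using a b fin eq by simp
  finally have "\<forall>i\<in>J. c i = 0" by (rule ind)
  thus False using a ne by (auto simp: c_def)
qed

lemma dual_vec:
  fixes g :: "nat \<Rightarrow> 'a::euclidean_space"
  assumes fin: "finite J" and ind: "\<And>c. (\<Sum>i\<in>J. c i *\<^sub>R g i) = 0 \<Longrightarrow> \<forall>i\<in>J. c i = 0" and k: "k \<in> J"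
  shows "\<exists>u. \<forall>i\<in>J. g i \<bullet> u = (if i = k then 1 else 0)"
proof -
  have inj: "inj_on g J" by (rule indep_inj[OF fin ind])
  define S where "S = g ` (J - {k})"
  obtain y z where y: "y \<in> span S" and z: "\<And>w. w \<in> span S \<Longrightarrow> orthogonal z w" and gk: "g k = y + z"
    using orthogonal_subspace_decomp_exists[of S "g k"] by blast
  have znz: "z \<noteq> 0"
  proof
    assume "z = 0"
    hence gy: "g k = y" using gk by simp
    have "finite S" using fin by (simp add: S_def)
    then obtain u where u: "y = (\<Sum>w\<in>S. u w *\<^sub>R w)" using y span_finite by blast
    have inj2: "inj_on g (J - {k})" using inj by (rule inj_on_subset) auto
    have y2: "y = (\<Sum>i\<in>J - {k}. u (g i) *\<^sub>R g i)"
      using u unfolding S_def by (simp add: sum.reindex[OF inj2])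
    define c where "c i = (if i = k then 1 else - u (g i))" for i
    have "(\<Sum>i\<in>J. c i *\<^sub>R g i) = c k *\<^sub>R g k + (\<Sum>i\<in>J - {k}. c i *\<^sub>R g i)"
      using fin k by (simp add: sum.remove)
    also have "(\<Sum>i\<in>J - {k}. c i *\<^sub>R g i) = (\<Sum>i\<in>J - {k}. - (u (g i) *\<^sub>R g i))"
      by (intro sum.cong) (auto simp: c_def)
    also have "\<dots> = - y" using y2 by (simp add: sum_negf)
    finally have "(\<Sum>i\<in>J. c i *\<^sub>R g i) = 0" using gy by (simp add: c_def)
    hence "c k = 0" using ind k by blast
    thus False by (simp add: c_def)
  qed
  have orth: "\<And>i. i \<in> J \<Longrightarrow> i \<noteq> k \<Longrightarrow> g i \<bullet> z = 0"
  proof -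
    fix i assume "i \<in> J" "i \<noteq> k"
    hence "g i \<in> span S" unfolding S_def by (intro span_base) auto
    hence "z \<bullet> g i = 0" using z unfolding orthogonal_def by blast
    thus "g i \<bullet> z = 0" by (simp add: inner_commute)
  qed
  have "y \<bullet> z = 0" using z[OF y] by (simp add: orthogonal_def inner_commute)
  hence gkz: "g k \<bullet> z = z \<bullet> z" using gk by (simp add: inner_add_left)
  have zz: "z \<bullet> z > 0" using znz by simp
  show ?thesis
  proof (intro exI[of _ "(1 / (z \<bullet> z)) *\<^sub>R z"] ballI)
    fix i assume i: "i \<in> J"
    show "g i \<bullet> ((1 / (z \<bullet> z)) *\<^sub>R z) = (if i = k then 1 else 0)"
      using orth[OF i] gkz zz by (auto simp: inner_scaleR_right)
  qed
qed

lemma target_vec: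
  fixes g :: "nat \<Rightarrow> 'a::euclidean_space"
  assumes fin: "finite J" and ind: "\<And>c. (\<Sum>i\<in>J. c i *\<^sub>R g i) = 0 \<Longrightarrow> \<forall>i\<in>J. c i = 0"
  shows "\<exists>v. \<forall>i\<in>J. g i \<bullet> v = t i"
proof -
  have "\<forall>k\<in>J. \<exists>u. \<forall>i\<in>J. g i \<bullet> u = (if i = k then 1 else 0)"
    using dual_vec[OF fin ind] by blast
  then obtain u where u: "\<And>k i. k \<in> J \<Longrightarrow> i \<in> J \<Longrightarrow> g i \<bullet> u k = (if i = k then 1 else 0)"
    by metis
  show ?thesis
  proof (intro exI[of _ "\<Sum>k\<in>J. t k *\<^sub>R u k"] ballI)
    fix i assume i: "i \<in> J"
    have "g i \<bullet> (\<Sum>k\<in>J. t k *\<^sub>R u k) = (\<Sum>k\<in>J. t k * (if i = k then 1 else 0))"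
      using u i by (simp add: inner_sum_right)
    also have "\<dots> = t i" using fin i by (simp add: if_distrib cong: if_cong)
    finally show "g i \<bullet> (\<Sum>k\<in>J. t k *\<^sub>R u k) = t i" .
  qed
qed


context PW begin

lemma comp_in_face:
  assumes x: "x \<in> one_face_pts D N Ds" and xj: "x \<in> frontier (Ds j)" and j: "j < N"
  shows "connected_component_set (one_face_pts D N Ds) x \<subseteq> frontier (Ds j)"
proof -
  define S where "S = one_face_pts D N Ds"
  define C where "C = connected_component_set S x"
  define A where "A = frontier (Ds j)"
  define B where "B = (\<Union>k\<in>{..<N} - {j}. frontier (Ds k))"
  have conn: "connected C" unfolding C_def by simp
  have CS: "C \<subseteq> S" unfolding C_def by (rule connected_component_subset)
  have xC: "x \<in> C" unfolding C_def using x by (simp add: S_def connected_component_refl)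
  have clA: "closed A" unfolding A_def by simp
  have clB: "closed B" unfolding B_def by (intro closed_UN) auto
  have card1: "\<And>z. z \<in> S \<Longrightarrow> card {k. k < N \<and> z \<in> frontier (Ds k)} = 1"
    unfolding S_def one_face_pts_def by auto
  have SAB: "S \<subseteq> A \<union> B"
  proof
    fix z assume z: "z \<in> S"
    then obtain m where m: "{k. k < N \<and> z \<in> frontier (Ds k)} = {m}" using card1 card_1_singletonE by blast
    hence "m < N" "z \<in> frontier (Ds m)" by auto
    thus "z \<in> A \<union> B" unfolding A_def B_def by (cases "m = j") auto
  qed
  have disj: "A \<inter> B \<inter> S = {}"
  proof (rule ccontr)
    assume "A \<inter> B \<inter> S \<noteq> {}"
    then obtain z k where z: "z \<in> S" "z \<in> frontier (Ds j)" "k < N" "k \<noteq> j" "z \<in> frontier (Ds k)"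
      unfolding A_def B_def by auto
    obtain m where m: "{k. k < N \<and> z \<in> frontier (Ds k)} = {m}" using card1[OF z(1)] card_1_singletonE by blast
    have "j \<in> {m}" "k \<in> {m}" using z j by (simp_all add: m[symmetric])
    thus False using z(4) by simp
  qed
  have "\<not> (A \<inter> C \<noteq> {} \<and> B \<inter> C \<noteq> {})"
    using conn clA clB SAB disj CS unfolding connected_closed by blast
  moreover have "A \<inter> C \<noteq> {}" using xC xj by (auto simp: A_def)
  ultimately have "B \<inter> C = {}" by blast
  thus ?thesis using CS SAB by (auto simp: C_def[symmetric] S_def[symmetric] A_def[symmetric])
qed

lemma single_pt:
  assumes j: "j < N" and x0: "r j x = 0" and neg: "\<And>i. i < N \<Longrightarrow> i \<noteq> j \<Longrightarrow> r i x < 0"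
  shows "x \<in> one_face_pts D N Ds" "x \<in> frontier (Ds j)"
proof -
  show xj: "x \<in> frontier (Ds j)" using frontier_Ds[OF j] x0 by simp
  have set: "{k. k < N \<and> x \<in> frontier (Ds k)} = {j}"
    using frontier_Ds neg x0 j by fastforce
  define Op where "Op = (\<Inter>i\<in>{..<N} - {j}. Ds i)"
  have oO: "open Op" unfolding Op_def using open_Ds by (intro open_INT) auto
  have xO: "x \<in> Op" unfolding Op_def using Ds_eq neg by auto
  have "x \<in> closure (Ds j)" using xj by (simp add: frontier_def)
  hence "x \<in> closure (Op \<inter> Ds j)" using open_Int_closure_subset[OF oO] xO by blast
  moreover have "Op \<inter> Ds j = D" unfolding Op_def D_eq using j by auto
  ultimately have "x \<in> closure D" by simp
  moreover have "x \<notin> Ds j" using Ds_eq[OF j] x0 by simp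
  hence "x \<notin> D" using j D_eq by auto
  ultimately have "x \<in> frontier D" by (simp add: frontier_D)
  thus "x \<in> one_face_pts D N Ds" unfolding one_face_pts_def using set by simp
qed

end

context PW begin

lemma face_exists:
  assumes z: "\<zeta> \<in> frontier D" and j: "j < N" and r0: "r j \<zeta> = 0"
  shows "\<exists>F. is_face D N Ds F \<and> \<zeta> \<in> closure F \<and> F \<subseteq> frontier (Ds j)"
proof -
  define J where "J = {i. i < N \<and> r i \<zeta> = 0}"
  have finJ: "finite J" unfolding J_def by simp
  have jJ: "j \<in> J" using j r0 by (simp add: J_def)
  have JN: "J \<subseteq> {..<N}" unfolding J_def by auto
  have frJ: "\<forall>i\<in>J. \<zeta> \<in> frontier (Ds i)" using frontier_Ds by (auto simp: J_def)
  define gg where "gg i = grad (r i) \<zeta>" for i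
  have ind: "\<And>c. (\<Sum>i\<in>J. c i *\<^sub>R gg i) = 0 \<Longrightarrow> \<forall>i\<in>J. c i = 0"
    using indep[OF JN frJ] unfolding gg_def by blast
  have "\<exists>v. \<forall>i\<in>J. gg i \<bullet> v = (if i = j then 0 else -1)"
    by (rule target_vec[OF finJ ind])
  then obtain v where v: "\<And>i. i \<in> J \<Longrightarrow> gg i \<bullet> v = (if i = j then 0 else -1)" by blast
  define g where "g = gg j"
  define G where "G = norm g"
  have gnz: "g \<noteq> 0" using grad_nz[OF j r0] by (simp add: g_def gg_def)
  hence Gpos: "G > 0" by (simp add: G_def)
  have Dg: "\<And>i w. i < N \<Longrightarrow> frechet_derivative (r i) (at \<zeta>) w = gg i \<bullet> w"
    using C1_grad[OF C1r] by (simp add: gg_def)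
  have zcl: "\<zeta> \<in> closure D" using z by (simp add: frontier_D)
  have notJ: "\<And>i. i < N \<Longrightarrow> i \<notin> J \<Longrightarrow> r i \<zeta> < 0"
    using closure_D_le[OF _ zcl] by (force simp: J_def)
  define M where "M = 1 + (\<Sum>i\<in>J. \<bar>gg i \<bullet> g\<bar>)"
  have Mi: "\<And>i. i \<in> J \<Longrightarrow> \<bar>gg i \<bullet> g\<bar> \<le> M"
  proof -
    fix i assume "i \<in> J"
    hence "\<bar>gg i \<bullet> g\<bar> \<le> (\<Sum>i\<in>J. \<bar>gg i \<bullet> g\<bar>)" using finJ by (intro member_le_sum) auto
    thus "\<bar>gg i \<bullet> g\<bar> \<le> M" by (simp add: M_def)
  qed
  have Mpos: "M \<ge> 1" unfolding M_def by (simp add: sum_nonneg)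
  define \<eta> where "\<eta> = 1 / (4 * M)"
  have eta: "\<eta> > 0" "\<eta> * M = 1/4" using Mpos by (auto simp: \<eta>_def)
  define V where "V = norm v"
  define K where "K = V + 2 * \<eta> * G + 1"
  have Kpos: "K \<ge> 1" using eta Gpos by (simp add: K_def V_def)
  define \<epsilon> where "\<epsilon> = min (G/2) (min (\<eta> * G^2 / (2*K)) (1 / (2*K)))"
  have epos: "\<epsilon> > 0" using Gpos eta Kpos by (simp add: \<epsilon>_def)
  have e1: "\<epsilon> \<le> G/2" and e2: "\<epsilon> * K \<le> \<eta> * G^2 / 2" and e3: "\<epsilon> * K \<le> 1/2"
    using Kpos by (auto simp: \<epsilon>_def field_simps min_def)
  define P where "P i d \<longleftrightarrow> (i \<in> J \<longrightarrow> (\<forall>x y. x \<in> ball \<zeta> d \<longrightarrow> y \<in> ball \<zeta> d \<longrightarrow>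
           \<bar>r i y - r i x - frechet_derivative (r i) (at \<zeta>) (y - x)\<bar> \<le> \<epsilon> * norm (y - x)))
         \<and> (i \<notin> J \<longrightarrow> (\<forall>x \<in> ball \<zeta> d. r i x < 0))" for i d
  have "\<exists>d>0. \<forall>d'. 0 < d' \<and> d' \<le> d \<longrightarrow> (\<forall>i\<in>{..<N}. P i d')"
  proof (rule finite_ex_min)
    fix i assume i: "i \<in> {..<N}"
    show "\<exists>d>0. \<forall>d'. 0 < d' \<and> d' \<le> d \<longrightarrow> P i d'"
    proof (cases "i \<in> J")
      case True
      obtain d where d: "d > 0" "\<forall>x y. x \<in> ball \<zeta> d \<longrightarrow> y \<in> ball \<zeta> d \<longrightarrow>
           \<bar>r i y - r i x - frechet_derivative (r i) (at \<zeta>) (y - x)\<bar> \<le> \<epsilon> * norm (y - x)"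
        using C1_SD[OF C1r epos] i by blast
      show ?thesis using d True by (intro exI[of _ d]) (auto simp: P_def)
    next
      case False
      hence "r i \<zeta> < 0" using notJ i by simp
      have "\<forall>e>0. \<exists>d>0. \<forall>x. dist x \<zeta> < d \<longrightarrow> dist (r i x) (r i \<zeta>) < e"
        using rcont[of i \<zeta>] i unfolding continuous_at_eps_delta by simp
      then obtain d where d0: "d > 0" "\<forall>x. dist x \<zeta> < d \<longrightarrow> dist (r i x) (r i \<zeta>) < - r i \<zeta>"
        using \<open>r i \<zeta> < 0\<close> by (meson neg_0_less_iff_less)
      have d: "d > 0" "\<And>x. dist x \<zeta> < d \<Longrightarrow> r i x < 0"
        using d0 by (auto simp: dist_real_def abs_less_iff)
      show ?thesis using d False by (intro exI[of _ d]) (auto simp: P_def dist_commute)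
    qed
  qed simp
  then obtain \<delta> where \<delta>: "\<delta> > 0" "\<forall>i\<in>{..<N}. P i \<delta>" by (meson order_refl)
  have SD: "\<And>i x y. i \<in> J \<Longrightarrow> x \<in> ball \<zeta> \<delta> \<Longrightarrow> y \<in> ball \<zeta> \<delta> \<Longrightarrow>
           \<bar>r i y - r i x - gg i \<bullet> (y - x)\<bar> \<le> \<epsilon> * norm (y - x)"
    using \<delta>(2) JN Dg unfolding P_def by (metis lessThan_iff subset_eq)
  have NB: "\<And>i x. i < N \<Longrightarrow> i \<notin> J \<Longrightarrow> x \<in> ball \<zeta> \<delta> \<Longrightarrow> r i x < 0"
    using \<delta>(2) unfolding P_def by auto
  have zJ: "\<And>i. i \<in> J \<Longrightarrow> r i \<zeta> = 0" by (simp add: J_def)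
  define s1 where "s1 = \<delta> / (2 * K)"
  have s1pos: "s1 > 0" using \<delta> Kpos by (simp add: s1_def)
  have s1K: "s1 * K = \<delta> / 2" using Kpos by (simp add: s1_def)
  define T where "T = 2 * \<eta> * s1"
  define p where "p s \<tau> = \<zeta> + s *\<^sub>R v + \<tau> *\<^sub>R g" for s \<tau>
  have pdist: "norm (p s \<tau> - \<zeta>) \<le> s * V + \<bar>\<tau>\<bar> * G" if "s \<ge> 0" for s \<tau>
  proof -
    have "norm (p s \<tau> - \<zeta>) = norm (s *\<^sub>R v + \<tau> *\<^sub>R g)" by (simp add: p_def)
    also have "\<dots> \<le> norm (s *\<^sub>R v) + norm (\<tau> *\<^sub>R g)" by (rule norm_triangle_ineq)
    finally show ?thesis using that by (simp add: V_def G_def)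
  qed
  have pball: "p s \<tau> \<in> ball \<zeta> \<delta>" if "0 < s" "s \<le> s1" "\<bar>\<tau>\<bar> \<le> T" for s \<tau>
  proof -
    have "norm (p s \<tau> - \<zeta>) \<le> s * V + \<bar>\<tau>\<bar> * G" using pdist that by simp
    also have "\<dots> \<le> s1 * V + T * G"
      using that Gpos by (intro add_mono mult_mono) (auto simp: V_def)
    also have "\<dots> < s1 * K" using s1pos eta Gpos by (simp add: K_def T_def algebra_simps)
    finally show ?thesis using s1K \<delta> by (simp add: dist_norm norm_minus_commute)
  qed
  have Tle: "\<bar>\<tau>\<bar> \<le> T" if "0 < s" "s \<le> s1" "\<bar>\<tau>\<bar> \<le> \<eta> * s" for s \<tau>
  proof -
    have "\<eta> * s \<le> \<eta> * s1" using that eta by (simp add: mult_left_mono)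
    moreover have "T = 2 * (\<eta> * s1)" "\<eta> * s1 > 0" using eta s1pos by (simp_all add: T_def)
    ultimately show ?thesis using that by linarith
  qed
  have Dj: "gg j \<bullet> (a *\<^sub>R v + b *\<^sub>R g) = b * G^2" for a b
    using v[OF jJ] by (simp add: inner_add_right g_def G_def power2_norm_eq_inner)
  have mono: "r j (p s \<tau>1) < r j (p s \<tau>2)"
    if "0 < s" "s \<le> s1" "\<bar>\<tau>1\<bar> \<le> T" "\<bar>\<tau>2\<bar> \<le> T" "\<tau>1 < \<tau>2" for s \<tau>1 \<tau>2
  proof -
    have d: "p s \<tau>2 - p s \<tau>1 = (\<tau>2 - \<tau>1) *\<^sub>R g" by (simp add: p_def algebra_simps)
    have "\<bar>r j (p s \<tau>2) - r j (p s \<tau>1) - gg j \<bullet> (p s \<tau>2 - p s \<tau>1)\<bar> \<le> \<epsilon> * norm (p s \<tau>2 - p s \<tau>1)"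
      using SD[OF jJ pball pball] that by blast
    hence "\<bar>r j (p s \<tau>2) - r j (p s \<tau>1) - (\<tau>2 - \<tau>1) * G^2\<bar> \<le> \<epsilon> * ((\<tau>2 - \<tau>1) * G)"
      using that by (simp add: d g_def G_def power2_norm_eq_inner)
    moreover have "\<epsilon> * ((\<tau>2 - \<tau>1) * G) \<le> (G/2) * ((\<tau>2 - \<tau>1) * G)"
      using e1 that Gpos by (intro mult_right_mono) auto
    moreover have "(G/2) * ((\<tau>2 - \<tau>1) * G) < (\<tau>2 - \<tau>1) * G^2"
      using that Gpos by (simp add: power2_eq_square)
    ultimately show ?thesis by linarith
  qed
  have est: "\<bar>r i (p s \<tau>) - gg i \<bullet> (s *\<^sub>R v + \<tau> *\<^sub>R g)\<bar> \<le> \<epsilon> * (s * K)"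
    if "i \<in> J" "0 < s" "s \<le> s1" "\<bar>\<tau>\<bar> \<le> \<eta> * s" for i s \<tau>
  proof -
    have T: "\<bar>\<tau>\<bar> \<le> T" using Tle that by blast
    have "\<bar>r i (p s \<tau>) - r i \<zeta> - gg i \<bullet> (p s \<tau> - \<zeta>)\<bar> \<le> \<epsilon> * norm (p s \<tau> - \<zeta>)"
      using SD[OF that(1) _ pball[OF that(2,3) T]] \<delta> by simp
    moreover have "norm (p s \<tau> - \<zeta>) \<le> s * K"
    proof -
      have "norm (p s \<tau> - \<zeta>) \<le> s * V + \<bar>\<tau>\<bar> * G" using pdist that by simp
      also have "\<dots> \<le> s * V + (\<eta> * s) * G" using that Gpos by (intro add_left_mono mult_right_mono) auto
      also have "\<dots> \<le> s * K" using that eta Gpos by (simp add: K_def algebra_simps)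
      finally show ?thesis .
    qed
    moreover have "p s \<tau> - \<zeta> = s *\<^sub>R v + \<tau> *\<^sub>R g" by (simp add: p_def)
    moreover have "\<epsilon> * norm (p s \<tau> - \<zeta>) \<le> \<epsilon> * (s * K)"
      using calculation(2) epos by (simp add: mult_left_mono)
    ultimately show ?thesis using zJ[OF that(1)] by simp
  qed
  have posj: "r j (p s (\<eta> * s)) > 0" and negj: "r j (p s (- (\<eta> * s))) < 0" if "0 < s" "s \<le> s1" for s
  proof -
    have a: "\<epsilon> * (s * K) \<le> \<eta> * G^2 / 2 * s"
    proof -
      have "\<epsilon> * (s * K) = (\<epsilon> * K) * s" by simp
      also have "\<dots> \<le> (\<eta> * G^2 / 2) * s" using e2 that by (intro mult_right_mono) auto
      finally show ?thesis by simp
    qed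
    have b: "\<eta> * G^2 / 2 * s < \<eta> * s * G^2" using that eta Gpos by simp
    have c: "\<epsilon> * (s * K) < \<eta> * s * G^2" using a b by linarith
    have t1: "\<bar>\<eta> * s\<bar> \<le> \<eta> * s" "\<bar>- (\<eta> * s)\<bar> \<le> \<eta> * s" using eta that by auto
    have e1: "\<bar>r j (p s (\<eta> * s)) - \<eta> * s * G^2\<bar> \<le> \<epsilon> * (s * K)"
      using est[OF jJ that t1(1)] Dj[of s "\<eta> * s"] by simp
    have e2: "\<bar>r j (p s (- (\<eta> * s))) + \<eta> * s * G^2\<bar> \<le> \<epsilon> * (s * K)"
      using est[OF jJ that t1(2)] Dj[of s "- (\<eta> * s)"] by simp
    show "r j (p s (\<eta> * s)) > 0" using e1 c by arith
    show "r j (p s (- (\<eta> * s))) < 0" using e2 c by arith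
  qed
  have others: "r i (p s \<tau>) < 0" if "i < N" "i \<noteq> j" "0 < s" "s \<le> s1" "\<bar>\<tau>\<bar> \<le> \<eta> * s" for i s \<tau>
  proof (cases "i \<in> J")
    case False
    have T: "\<bar>\<tau>\<bar> \<le> T" using Tle that by blast
    show ?thesis using NB[OF that(1) False pball[OF that(3,4) T]] .
  next
    case True
    have gi: "gg i \<bullet> (s *\<^sub>R v + \<tau> *\<^sub>R g) = - s + \<tau> * (gg i \<bullet> g)"
      using v[OF True] that by (simp add: inner_add_right)
    have "\<bar>\<tau> * (gg i \<bullet> g)\<bar> \<le> (\<eta> * s) * M"
      using Mi[OF True] that eta by (simp add: abs_mult mult_mono)
    moreover have "(\<eta> * s) * M = (\<eta> * M) * s" by simp
    ultimately have "\<bar>\<tau> * (gg i \<bullet> g)\<bar> \<le> s / 4" using eta(2) by simp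
    moreover have "\<epsilon> * (s * K) \<le> s / 2"
    proof -
      have "\<epsilon> * (s * K) = (\<epsilon> * K) * s" by simp
      also have "\<dots> \<le> (1/2) * s" using e3 that by (intro mult_right_mono) auto
      finally show ?thesis by simp
    qed
    ultimately show ?thesis using est[OF True that(3-5)] gi that(3) by arith
  qed
  have contp: "isCont (\<lambda>x. r j (p x \<tau>)) s" for s \<tau>
  proof -
    have "isCont (\<lambda>x. \<zeta> + x *\<^sub>R v + \<tau> *\<^sub>R g) s" by (intro continuous_intros)
    thus ?thesis unfolding p_def using rcont[OF j] by (rule continuous_at_compose[unfolded o_def])
  qed
  have contt: "isCont (\<lambda>x. r j (p s x)) \<tau>" for s \<tau>
  proof -
    have "isCont (\<lambda>x. \<zeta> + s *\<^sub>R v + x *\<^sub>R g) \<tau>" by (intro continuous_intros)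
    thus ?thesis unfolding p_def using rcont[OF j] by (rule continuous_at_compose[unfolded o_def])
  qed
  have ex0: "\<exists>\<tau>. \<bar>\<tau>\<bar> \<le> \<eta> * s \<and> r j (p s \<tau>) = 0" if "s \<in> {0<..s1}" for s
  proof -
    have s: "0 < s" "s \<le> s1" using that by auto
    obtain \<tau> where "- (\<eta> * s) \<le> \<tau>" "\<tau> \<le> \<eta> * s" "r j (p s \<tau>) = 0"
      using IVT[of "\<lambda>x. r j (p s x)" "- (\<eta> * s)" 0 "\<eta> * s"] posj[OF s] negj[OF s] contt eta s
      by (auto simp: less_imp_le)
    thus ?thesis by (intro exI[of _ \<tau>]) auto
  qed
  then obtain tau where tau: "\<And>s. s \<in> {0<..s1} \<Longrightarrow> \<bar>tau s\<bar> \<le> \<eta> * s \<and> r j (p s (tau s)) = 0"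
    by metis
  have uniq: "\<tau> = tau s" if "s \<in> {0<..s1}" "\<bar>\<tau>\<bar> \<le> T" "r j (p s \<tau>) = 0" for s \<tau>
  proof -
    have s: "0 < s" "s \<le> s1" using that by auto
    have tT: "\<bar>tau s\<bar> \<le> T" using Tle[OF s] tau[OF that(1)] by blast
    show ?thesis
    proof (rule ccontr)
      assume "\<tau> \<noteq> tau s"
      hence "\<tau> < tau s \<or> tau s < \<tau>" by linarith
      thus False using mono[OF s that(2) tT] mono[OF s tT that(2)] that(3) tau[OF that(1)] by auto
    qed
  qed
  have conttau: "continuous_on {0<..s1} tau"
    unfolding continuous_on_iff
  proof (intro ballI allI impI)
    fix s0 e :: real assume s0: "s0 \<in> {0<..s1}" and e: "e > 0"
    have s0': "0 < s0" "s0 \<le> s1" using s0 by auto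
    define t0 where "t0 = tau s0"
    define e' where "e' = min e (\<eta> * s1)"
    have e': "e' > 0" "e' \<le> e" "e' \<le> \<eta> * s1" using e eta s1pos by (auto simp: e'_def)
    have t0b: "\<bar>t0\<bar> \<le> \<eta> * s0" using tau[OF s0] by (simp add: t0_def)
    have ee: "\<eta> * s0 \<le> \<eta> * s1" using s0' eta by (simp add: mult_left_mono)
    have T2: "T = 2 * (\<eta> * s1)" by (simp add: T_def)
    have bnd: "\<bar>t0 + e'\<bar> \<le> T" "\<bar>t0 - e'\<bar> \<le> T" "\<bar>t0\<bar> \<le> T"
      using t0b e' ee T2 by arith+
    have z0: "r j (p s0 t0) = 0" using tau[OF s0] by (simp add: t0_def)
    have pp: "r j (p s0 (t0 + e')) > 0" using mono[OF s0' bnd(3) bnd(1)] e' z0 by simp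
    have nn: "r j (p s0 (t0 - e')) < 0" using mono[OF s0' bnd(2) bnd(3)] e' z0 by simp
    obtain d1 where d1: "d1 > 0" "\<And>x. dist x s0 < d1 \<Longrightarrow> dist (r j (p x (t0 + e'))) (r j (p s0 (t0 + e'))) < r j (p s0 (t0 + e'))"
      using contp[of s0 "t0 + e'"] pp unfolding continuous_at_eps_delta by blast
    obtain d2 where d2: "d2 > 0" "\<And>x. dist x s0 < d2 \<Longrightarrow> dist (r j (p x (t0 - e'))) (r j (p s0 (t0 - e'))) < - r j (p s0 (t0 - e'))"
      using contp[of s0 "t0 - e'"] nn unfolding continuous_at_eps_delta by (meson neg_0_less_iff_less)
    show "\<exists>d>0. \<forall>x'\<in>{0<..s1}. dist x' s0 < d \<longrightarrow> dist (tau x') (tau s0) < e"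
    proof (intro exI[of _ "min d1 d2"] conjI ballI impI)
      show "min d1 d2 > 0" using d1 d2 by simp
      fix x assume x: "x \<in> {0<..s1}" and dx: "dist x s0 < min d1 d2"
      have x': "0 < x" "x \<le> s1" using x by auto
      have P: "r j (p x (t0 + e')) > 0" using d1(2)[of x] dx by (auto simp: dist_real_def)
      have Q: "r j (p x (t0 - e')) < 0" using d2(2)[of x] dx by (auto simp: dist_real_def)
      have tx: "\<bar>tau x\<bar> \<le> T" using Tle[OF x'] tau[OF x] by blast
      have zx: "r j (p x (tau x)) = 0" using tau[OF x] by blast
      have "tau x < t0 + e'"
      proof (rule ccontr)
        assume "\<not> ?thesis"
        hence "t0 + e' < tau x \<or> t0 + e' = tau x" by linarith
        thus False using mono[OF x' bnd(1) tx] P zx by auto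
      qed
      moreover have "t0 - e' < tau x"
      proof (rule ccontr)
        assume "\<not> ?thesis"
        hence "tau x < t0 - e' \<or> t0 - e' = tau x" by linarith
        thus False using mono[OF x' tx bnd(2)] Q zx by auto
      qed
      ultimately show "dist (tau x) (tau s0) < e" using e' by (simp add: dist_real_def t0_def abs_less_iff)
    qed
  qed
  define gam where "gam s = p s (tau s)" for s
  have contg: "continuous_on {0<..s1} gam"
    unfolding gam_def p_def by (intro continuous_intros conttau)
  have gprops: "gam s \<in> one_face_pts D N Ds" "gam s \<in> frontier (Ds j)" if "s \<in> {0<..s1}" for s
  proof -
    have s: "0 < s" "s \<le> s1" using that by auto
    have "r j (gam s) = 0" using tau[OF that] by (simp add: gam_def)
    moreover have "\<And>i. i < N \<Longrightarrow> i \<noteq> j \<Longrightarrow> r i (gam s) < 0"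
      using others[OF _ _ s] tau[OF that] by (simp add: gam_def)
    ultimately show "gam s \<in> one_face_pts D N Ds" "gam s \<in> frontier (Ds j)"
      using single_pt[OF j] by blast+
  qed
  define F where "F = connected_component_set (one_face_pts D N Ds) (gam s1)"
  have s1in: "s1 \<in> {0<..s1}" using s1pos by simp
  have face: "is_face D N Ds F" unfolding is_face_def F_def using gprops(1)[OF s1in] by blast
  have Fj: "F \<subseteq> frontier (Ds j)" unfolding F_def by (rule comp_in_face[OF gprops[OF s1in] j])
  have imF: "gam ` {0<..s1} \<subseteq> F" unfolding F_def
  proof (rule connected_component_maximal)
    show "gam s1 \<in> gam ` {0<..s1}" using s1in by blast
    show "connected (gam ` {0<..s1})" by (rule connected_continuous_image[OF contg]) (simp add: is_interval_connected)
    show "gam ` {0<..s1} \<subseteq> one_face_pts D N Ds" using gprops(1) by blast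
  qed
  have "\<zeta> \<in> closure F" unfolding closure_approachable
  proof (intro allI impI)
    fix e :: real assume e: "e > 0"
    define s where "s = min s1 (e / (2 * K))"
    have s: "0 < s" "s \<le> s1" "s \<le> e / (2 * K)" using s1pos e Kpos by (auto simp: s_def)
    have sin: "s \<in> {0<..s1}" using s by simp
    have "norm (gam s - \<zeta>) \<le> s * V + \<bar>tau s\<bar> * G" unfolding gam_def using pdist s by simp
    also have "\<dots> \<le> s * V + (\<eta> * s) * G" using tau[OF sin] Gpos by (intro add_left_mono mult_right_mono) auto
    also have "\<dots> \<le> s * K" using s eta Gpos by (simp add: K_def algebra_simps)
    also have "\<dots> \<le> e / 2" using s Kpos by (simp add: field_simps)
    also have "\<dots> < e" using e by simp
    finally show "\<exists>x\<in>F. dist x \<zeta> < e" using imF sin by (intro bexI[of _ "gam s"]) (auto simp: dist_norm)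
  qed
  thus ?thesis using face Fj by blast
qed

end

context PW begin

lemma deriv_pos:
  assumes z: "\<zeta> \<in> frontier D" and j: "j < N" and r0: "r j \<zeta> = 0"
  shows "frechet_derivative (r j) (at \<zeta>) \<zeta> > 0"
proof -
  obtain F where F: "is_face D N Ds F" "\<zeta> \<in> closure F" "F \<subseteq> frontier (Ds j)"
    using face_exists[OF assms] by blast
  have "frechet_derivative (r j) (at \<zeta>) \<zeta> \<noteq> 0" using transv[OF z F(1,2) j F(3)] .
  thus ?thesis using sign_nonneg[OF assms] by linarith
qed

definition Q :: "nat \<Rightarrow> 'a \<Rightarrow> real \<Rightarrow> bool" where
  "Q i \<zeta>0 e \<longleftrightarrow> (\<forall>\<zeta>\<in>frontier D. dist \<zeta> \<zeta>0 < e \<longrightarrow> (\<forall>s. 0 < s \<and> s \<le> e \<longrightarrow>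
       (\<forall>y. dist y ((1 - s) *\<^sub>R \<zeta>) < e * s \<longrightarrow> r i y < 0)))"

lemma Q_mono: "Q i \<zeta>0 e \<Longrightarrow> 0 < e' \<Longrightarrow> e' \<le> e \<Longrightarrow> Q i \<zeta>0 e'"
proof -
  assume q: "Q i \<zeta>0 e" and e': "0 < e'" "e' \<le> e"
  show "Q i \<zeta>0 e'" unfolding Q_def
  proof (intro ballI allI impI)
    fix \<zeta> s y assume z: "\<zeta> \<in> frontier D" "dist \<zeta> \<zeta>0 < e'" and s: "0 < s \<and> s \<le> e'"
      and y: "dist y ((1 - s) *\<^sub>R \<zeta>) < e' * s"
    have "e' * s \<le> e * s" using e' s by (simp add: mult_right_mono)
    thus "r i y < 0" using q z s y e' unfolding Q_def by (meson less_le_trans order_trans)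
  qed
qed

lemma Q_ex:
  assumes i: "i < N" and z0: "\<zeta>0 \<in> frontier D"
  shows "\<exists>e>0. Q i \<zeta>0 e"
proof -
  have z0cl: "\<zeta>0 \<in> closure D" using z0 by (simp add: frontier_D)
  have le0: "\<And>\<zeta>. \<zeta> \<in> frontier D \<Longrightarrow> r i \<zeta> \<le> 0" using closure_D_le[OF i] by (simp add: frontier_D)
  define n0 where "n0 = norm \<zeta>0"
  have n2: "n0 + 2 > 0" and n3: "n0 + 3 > 0" using norm_ge_zero[of \<zeta>0] unfolding n0_def by linarith+
  have geo: "dist y \<zeta>0 < e * (n0 + 3) \<and> norm (y - \<zeta>) \<le> s * (n0 + 2)"
    if e: "0 < e" "e \<le> 1" and z: "dist \<zeta> \<zeta>0 < e" and s: "0 < s" "s \<le> e"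
      and y: "dist y ((1 - s) *\<^sub>R \<zeta>) < e * s" for e \<zeta> s y
  proof -
    have nz: "norm \<zeta> \<le> n0 + 1"
      using z e norm_triangle_ineq2[of \<zeta> \<zeta>0] by (simp add: n0_def dist_norm)
    have es: "e * s \<le> s" using e s by (simp add: mult_left_le_one_le)
    have es2: "e * s \<le> e" using e s by (simp add: mult_right_le_one_le)
    have sz: "s * norm \<zeta> \<le> s * (n0 + 1)" using s nz by (simp add: mult_left_mono)
    have sz2: "s * (n0 + 1) \<le> e * (n0 + 1)" using s by (simp add: mult_right_mono n0_def)
    have yz: "y - \<zeta> = (y - (1 - s) *\<^sub>R \<zeta>) - s *\<^sub>R \<zeta>" by (simp add: algebra_simps)
    have "norm (y - \<zeta>) \<le> norm (y - (1 - s) *\<^sub>R \<zeta>) + norm (s *\<^sub>R \<zeta>)"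
      unfolding yz by (rule norm_triangle_ineq4)
    hence n1: "norm (y - \<zeta>) < e * s + s * norm \<zeta>" using y s by (simp add: dist_norm)
    have "dist y \<zeta>0 \<le> norm (y - \<zeta>) + dist \<zeta> \<zeta>0"
      by (metis dist_norm dist_triangle)
    thus ?thesis using n1 z es es2 sz sz2 by (simp add: algebra_simps)
  qed
  show ?thesis
  proof (cases "r i \<zeta>0 = 0")
    case False
    hence neg: "r i \<zeta>0 < 0" using le0[OF z0] by simp
    have "\<forall>e>0. \<exists>d>0. \<forall>x. dist x \<zeta>0 < d \<longrightarrow> dist (r i x) (r i \<zeta>0) < e"
      using rcont[OF i, of \<zeta>0] unfolding continuous_at_eps_delta by simp
    then obtain \<rho> where \<rho>0: "\<rho> > 0" "\<forall>x. dist x \<zeta>0 < \<rho> \<longrightarrow> dist (r i x) (r i \<zeta>0) < - r i \<zeta>0"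
      using neg by (meson neg_0_less_iff_less)
    have \<rho>: "\<And>x. dist x \<zeta>0 < \<rho> \<Longrightarrow> r i x < 0" using \<rho>0 by (auto simp: dist_real_def abs_less_iff)
    define e where "e = min 1 (\<rho> / (n0 + 3))"
    have e: "0 < e" "e \<le> 1" "e * (n0 + 3) \<le> \<rho>"
    proof -
      show "0 < e" using \<rho>0 n3 by (simp add: e_def)
      show "e \<le> 1" by (simp add: e_def)
      have "e \<le> \<rho> / (n0 + 3)" by (simp add: e_def)
      thus "e * (n0 + 3) \<le> \<rho>" using n3 by (simp add: field_simps)
    qed
    show ?thesis
    proof (intro exI[of _ e] conjI e(1))
      show "Q i \<zeta>0 e" unfolding Q_def
      proof (intro ballI allI impI)
        fix \<zeta> s y assume "\<zeta> \<in> frontier D" "dist \<zeta> \<zeta>0 < e" "0 < s \<and> s \<le> e" "dist y ((1 - s) *\<^sub>R \<zeta>) < e * s"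
        hence "dist y \<zeta>0 < e * (n0 + 3)" using geo[OF e(1,2)] by blast
        thus "r i y < 0" using \<rho> e by simp
      qed
    qed
  next
    case True
    define D0 where "D0 = frechet_derivative (r i) (at \<zeta>0)"
    have lin: "linear D0" unfolding D0_def by (rule C1_lin[OF C1r[OF i]])
    define a where "a = D0 \<zeta>0"
    have apos: "a > 0" unfolding a_def D0_def using deriv_pos[OF z0 i True] .
    define L where "L = (\<Sum>b\<in>Basis. \<bar>D0 b\<bar>)"
    have L0: "L \<ge> 0" unfolding L_def by (simp add: sum_nonneg)
    have LB: "\<And>w. \<bar>D0 w\<bar> \<le> norm w * L" unfolding L_def by (rule lin_bound[OF lin])
    define \<epsilon> where "\<epsilon> = a / (4 * (n0 + 2))"
    have epos: "\<epsilon> > 0" unfolding \<epsilon>_def using apos n2 by (intro divide_pos_pos) auto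
    have en: "\<epsilon> * (n0 + 2) = a / 4" unfolding \<epsilon>_def using n2 by (simp add: field_simps)
    obtain \<delta> where \<delta>: "\<delta> > 0" "\<forall>x y. x \<in> ball \<zeta>0 \<delta> \<longrightarrow> y \<in> ball \<zeta>0 \<delta> \<longrightarrow>
           \<bar>r i y - r i x - D0 (y - x)\<bar> \<le> \<epsilon> * norm (y - x)"
      using C1_SD[OF C1r[OF i] epos] unfolding D0_def by blast
    define e where "e = min 1 (min (\<delta> / (n0 + 3)) (a / (8 * (L + 1))))"
    have e: "0 < e" "e \<le> 1" "e * (n0 + 3) \<le> \<delta>" "e * L \<le> a / 8"
    proof -
      show "0 < e" unfolding e_def using \<delta> apos L0 n3 by (auto intro!: divide_pos_pos)
      show "e \<le> 1" by (simp add: e_def)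
      have "e \<le> \<delta> / (n0 + 3)" by (simp add: e_def)
      thus "e * (n0 + 3) \<le> \<delta>" using n3 by (simp add: field_simps)
      have "e \<le> a / (8 * (L + 1))" by (simp add: e_def)
      hence "e * (L + 1) \<le> a / 8" using L0 by (simp add: field_simps)
      moreover have "e * L \<le> e * (L + 1)" using \<open>0 < e\<close> by simp
      ultimately show "e * L \<le> a / 8" by linarith
    qed
    show ?thesis
    proof (intro exI[of _ e] conjI e(1))
      show "Q i \<zeta>0 e" unfolding Q_def
      proof (intro ballI allI impI)
        fix \<zeta> s y assume z: "\<zeta> \<in> frontier D" "dist \<zeta> \<zeta>0 < e" and s: "0 < s \<and> s \<le> e"
          and y: "dist y ((1 - s) *\<^sub>R \<zeta>) < e * s"
        have g: "dist y \<zeta>0 < e * (n0 + 3)" "norm (y - \<zeta>) \<le> s * (n0 + 2)"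
          using geo[OF e(1,2) z(2) _ _ y] s by auto
        have "e * 1 \<le> e * (n0 + 3)" using e(1) by (intro mult_left_mono) (auto simp: n0_def)
        hence "dist \<zeta> \<zeta>0 < \<delta>" using z(2) e(3) by linarith
        hence zb: "\<zeta> \<in> ball \<zeta>0 \<delta>" by (simp add: dist_commute)
        have yb: "y \<in> ball \<zeta>0 \<delta>" using g e by (simp add: dist_commute)
        have SDi: "r i y - r i \<zeta> \<le> D0 (y - \<zeta>) + \<epsilon> * norm (y - \<zeta>)"
          using \<delta>(2) zb yb by fastforce
        define u where "u = y - (1 - s) *\<^sub>R \<zeta>"
        have nu: "norm u < e * s" using y by (simp add: u_def dist_norm)
        have yz: "y - \<zeta> = u - s *\<^sub>R (\<zeta>0 + (\<zeta> - \<zeta>0))" by (simp add: u_def algebra_simps)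
        have Dyz: "D0 (y - \<zeta>) = D0 u - s * a - s * D0 (\<zeta> - \<zeta>0)"
          unfolding yz a_def using lin by (simp add: linear_diff linear_add linear_scale algebra_simps)
        have "\<bar>D0 u\<bar> \<le> norm u * L" by (rule LB)
        also have "\<dots> \<le> (e * s) * L" using nu L0 by (simp add: mult_right_mono)
        also have "\<dots> = s * (e * L)" by simp
        finally have b1: "\<bar>D0 u\<bar> \<le> s * (e * L)" .
        have "\<bar>D0 (\<zeta> - \<zeta>0)\<bar> \<le> norm (\<zeta> - \<zeta>0) * L" by (rule LB)
        also have "\<dots> \<le> e * L" using z L0 by (simp add: mult_right_mono dist_norm)
        finally have "\<bar>D0 (\<zeta> - \<zeta>0)\<bar> \<le> e * L" .
        hence b2: "\<bar>s * D0 (\<zeta> - \<zeta>0)\<bar> \<le> s * (e * L)" using s by (simp add: abs_mult mult_left_mono)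
        have "\<epsilon> * norm (y - \<zeta>) \<le> \<epsilon> * (s * (n0 + 2))" using g epos by (simp add: mult_left_mono)
        also have "\<dots> = s * (\<epsilon> * (n0 + 2))" by simp
        also have "\<dots> = s * (a / 4)" by (simp only: en)
        finally have b3: "\<epsilon> * norm (y - \<zeta>) \<le> s * (a / 4)" .
        have b4: "s * (e * L) \<le> s * (a / 8)" using e s by (simp add: mult_left_mono)
        have b5: "s * a > 0" using s apos by simp
        have "r i \<zeta> \<le> 0" using le0 z by simp
        thus "r i y < 0" using SDi Dyz b1 b2 b3 b4 b5 by (simp add: abs_le_iff)
      qed
    qed
  qed
qed

end

context PW begin

lemma local_cone: "\<zeta>0 \<in> frontier D \<Longrightarrow> \<exists>e>0. \<forall>i<N. Q i \<zeta>0 e"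
proof -
  assume z0: "\<zeta>0 \<in> frontier D"
  have "\<exists>d>0. \<forall>d'. 0 < d' \<and> d' \<le> d \<longrightarrow> (\<forall>i\<in>{..<N}. Q i \<zeta>0 d')"
  proof (rule finite_ex_min)
    fix i assume "i \<in> {..<N}"
    then obtain e where "e > 0" "Q i \<zeta>0 e" using Q_ex z0 by blast
    thus "\<exists>d>0. \<forall>d'. 0 < d' \<and> d' \<le> d \<longrightarrow> Q i \<zeta>0 d'" using Q_mono by blast
  qed simp
  thus ?thesis by (meson lessThan_iff order_refl)
qed

lemma Qall_D:
  assumes "\<forall>i<N. Q i \<zeta>0 e" "\<zeta> \<in> frontier D" "dist \<zeta> \<zeta>0 < e" "0 < s" "s \<le> e"
    "dist y ((1 - s) *\<^sub>R \<zeta>) < e * s"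
  shows "y \<in> D"
proof -
  have "\<forall>i<N. r i y < 0" using assms unfolding Q_def by blast
  thus ?thesis using D_eq Ds_eq by auto
qed

lemma global_cone: "\<exists>e>0. \<forall>\<zeta>\<in>frontier D. \<forall>s y. 0 < s \<longrightarrow> s \<le> e \<longrightarrow> dist y ((1 - s) *\<^sub>R \<zeta>) < e * s \<longrightarrow> y \<in> D"
proof -
  have "\<forall>\<zeta>0\<in>frontier D. \<exists>e. e > 0 \<and> (\<forall>i<N. Q i \<zeta>0 e)" using local_cone by blast
  then obtain E where E: "\<And>\<zeta>0. \<zeta>0 \<in> frontier D \<Longrightarrow> E \<zeta>0 > 0 \<and> (\<forall>i<N. Q i \<zeta>0 (E \<zeta>0))" by metis
  have cpt: "compact (frontier D)" using bounded_D by (rule compact_frontier_bounded)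
  have cov: "frontier D \<subseteq> (\<Union>\<zeta>0\<in>frontier D. ball \<zeta>0 (E \<zeta>0))" using E by force
  obtain C' where C': "C' \<subseteq> frontier D" "finite C'" "frontier D \<subseteq> (\<Union>\<zeta>0\<in>C'. ball \<zeta>0 (E \<zeta>0))"
    using compactE_image[OF cpt _ cov] by blast
  define e where "e = Min (insert 1 (E ` C'))"
  have epos: "e > 0" unfolding e_def using C' E by (subst Min_gr_iff) auto
  have ele: "\<And>\<zeta>0. \<zeta>0 \<in> C' \<Longrightarrow> e \<le> E \<zeta>0" unfolding e_def using C' by (intro Min_le) auto
  show ?thesis
  proof (intro exI[of _ e] conjI epos ballI allI impI)
    fix \<zeta> s y assume z: "\<zeta> \<in> frontier D" and s: "0 < s" "s \<le> e" and y: "dist y ((1 - s) *\<^sub>R \<zeta>) < e * s"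
    obtain \<zeta>0 where z0: "\<zeta>0 \<in> C'" "\<zeta> \<in> ball \<zeta>0 (E \<zeta>0)" using C'(3) z by blast
    have es: "e * s \<le> E \<zeta>0 * s" using ele[OF z0(1)] s by (simp add: mult_right_mono)
    have z0f: "\<zeta>0 \<in> frontier D" using C' z0 by auto
    have q: "\<forall>i<N. Q i \<zeta>0 (E \<zeta>0)" using E z0f by blast
    show "y \<in> D"
    proof (rule Qall_D[OF q z])
      show "dist \<zeta> \<zeta>0 < E \<zeta>0" using z0(2) by (simp add: dist_commute)
      show "0 < s" using s by simp
      show "s \<le> E \<zeta>0" using s ele[OF z0(1)] by linarith
      show "dist y ((1 - s) *\<^sub>R \<zeta>) < E \<zeta>0 * s" using y es by linarith
    qed
  qed
qed

lemma bdist_ge: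
  assumes "\<And>y. dist y w < \<rho> \<Longrightarrow> y \<in> D" "frontier D \<noteq> {}"
  shows "\<rho> \<le> bdist D w"
  unfolding bdist_def infdist_notempty[OF assms(2)]
proof (rule cINF_greatest[OF assms(2)])
  fix k assume "k \<in> frontier D"
  hence "k \<notin> D" by (simp add: frontier_D)
  thus "\<rho> \<le> dist w k" using assms(1)[of k] by (force simp: dist_commute)
qed

end

context PW begin

lemma main_PW: "\<exists>C>1. \<forall>w\<in>D. w \<noteq> 0 \<longrightarrow> radial_bdist D w \<le> C * bdist D w"
proof (cases "D = {}")
  case True thus ?thesis by (intro exI[of _ 2]) auto
next
  case False
  then obtain x0 where x0: "x0 \<in> D" by blast
  have zD: "0 \<in> D" using star[OF x0, of 0] by simp
  obtain r0 where r0: "r0 > 0" "ball 0 r0 \<subseteq> D" using open_D zD open_contains_ball by blast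
  obtain e0 where e0: "e0 > 0" "\<And>\<zeta> s y. \<zeta> \<in> frontier D \<Longrightarrow> 0 < s \<Longrightarrow> s \<le> e0 \<Longrightarrow> dist y ((1 - s) *\<^sub>R \<zeta>) < e0 * s \<Longrightarrow> y \<in> D"
    using global_cone by blast
  define e where "e = min e0 (1/2)"
  have e: "e > 0" "e \<le> 1/2" using e0 by (auto simp: e_def)
  have cone: "y \<in> D" if "\<zeta> \<in> frontier D" "0 < s" "s \<le> e" "dist y ((1 - s) *\<^sub>R \<zeta>) < e * s" for \<zeta> s y
  proof -
    have "e * s \<le> e0 * s" using that by (intro mult_right_mono) (auto simp: e_def)
    moreover have "s \<le> e0" using that by (auto simp: e_def)
    ultimately have "dist y ((1 - s) *\<^sub>R \<zeta>) < e0 * s" "s \<le> e0" using that(4) by linarith+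
    thus ?thesis by (intro e0(2)[OF that(1,2)])
  qed
  have "bounded (closure D)" using bounded_D by (rule bounded_closure)
  then obtain R where R: "R > 0" "\<And>z. z \<in> closure D \<Longrightarrow> norm z \<le> R" using bounded_pos by blast
  define m where "m = r0 * (e * e) / (e * e + R)"
  have ee: "e * e > 0" using e by simp
  have mpos: "m > 0" using r0 ee R by (simp add: m_def)
  have dlow: "y \<in> D" if z: "\<zeta> \<in> frontier D" and s: "e < s" "s < 1" and y: "dist y ((1 - s) *\<^sub>R \<zeta>) < m" for \<zeta> s y
  proof -
    define x where "x = (1 - e) *\<^sub>R \<zeta>"
    have bx: "\<And>y'. dist y' x < e * e \<Longrightarrow> y' \<in> D" using cone[OF z e(1)] by (simp add: x_def)
    define l where "l = (1 - s) / (1 - e)"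
    have l: "0 < l" "l \<le> 1" using s e by (auto simp: l_def)
    have w: "(1 - s) *\<^sub>R \<zeta> = l *\<^sub>R x" using e by (simp add: l_def x_def)
    have xcl: "x \<in> closure D" unfolding x_def using z e by (intro star_closure) (auto simp: frontier_D)
    show ?thesis
    proof (cases "l \<ge> r0 / (e * e + R)")
      case True
      hence "l * (e * e) \<ge> r0 / (e * e + R) * (e * e)" using ee by (intro mult_right_mono) auto
      hence lm: "m \<le> l * (e * e)" by (simp add: m_def)
      define y' where "y' = (1 / l) *\<^sub>R y"
      have yy: "y = l *\<^sub>R y'" using l by (simp add: y'_def)
      have "dist y (l *\<^sub>R x) = l * dist y' x"
        unfolding yy using l by (simp add: dist_norm scaleR_diff_right[symmetric])
      hence "l * dist y' x < l * (e * e)" using y w lm by simp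
      hence "dist y' x < e * e" using l by simp
      hence "y' \<in> D" by (rule bx)
      thus ?thesis unfolding yy using star l by simp
    next
      case False
      hence lR: "l * R \<le> r0 / (e * e + R) * R" using R by (intro mult_right_mono) auto
      have "norm x \<le> R" using R(2)[OF xcl] .
      hence nw: "norm (l *\<^sub>R x) \<le> l * R" using l by (simp add: mult_left_mono)
      have aux: "\<And>a b c::real. a + b > 0 \<Longrightarrow> c / (a + b) * b + c * a / (a + b) = c"
      proof -
        fix a b c :: real assume "a + b > 0"
        hence "a + b \<noteq> 0" by simp
        have "c / (a + b) * b + c * a / (a + b) = (c * b + c * a) / (a + b)"
          by (simp add: add_divide_distrib)
        also have "c * b + c * a = c * (a + b)" by (simp add: algebra_simps)
        finally show "c / (a + b) * b + c * a / (a + b) = c" using \<open>a + b \<noteq> 0\<close> by simp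
      qed
      have "r0 / (e * e + R) * R + m = r0"
        unfolding m_def by (rule aux) (use ee R in linarith)
      moreover have "norm y \<le> norm (l *\<^sub>R x) + dist y (l *\<^sub>R x)"
        by (metis dist_norm norm_triangle_sub)
      moreover have "dist y (l *\<^sub>R x) < m" using y w by simp
      ultimately have "norm y < r0" using nw lR by linarith
      thus ?thesis using r0 by auto
    qed
  qed
  define C where "C = max 2 (max (R / e) (R / m))"
  show ?thesis
  proof (intro exI[of _ C] conjI ballI impI)
    show "C > 1" by (simp add: C_def)
    fix w assume wD: "w \<in> D" and w0: "w \<noteq> 0"
    have nw: "norm w > 0" using w0 by simp
    define A where "A = {t. 0 \<le> t \<and> t *\<^sub>R w \<in> D}"
    have A1: "1 \<in> A" using wD by (simp add: A_def)
    have Abdd: "bdd_above A"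
    proof (rule bdd_aboveI)
      fix t assume "t \<in> A"
      hence t: "0 \<le> t" "t *\<^sub>R w \<in> D" by (auto simp: A_def)
      have "t * norm w \<le> R" using R(2)[of "t *\<^sub>R w"] t closure_subset by auto
      thus "t \<le> R / norm w" using nw by (simp add: field_simps)
    qed
    define t0 where "t0 = Sup A"
    have Ane: "A \<noteq> {}" using A1 by blast
    have t01: "1 \<le> t0" unfolding t0_def by (rule cSup_upper[OF A1 Abdd])
    have upper: "\<And>t. t \<in> A \<Longrightarrow> t \<le> t0" unfolding t0_def using Abdd by (simp add: cSup_upper)
    have below: "t *\<^sub>R w \<in> D" if "0 \<le> t" "t < t0" for t
    proof -
      have "t < Sup A" using that by (simp add: t0_def)
      then obtain t' where t': "t' \<in> A" "t < t'" using less_cSup_iff[OF Ane Abdd] by blast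
      hence t'': "0 < t'" "t' *\<^sub>R w \<in> D" using that by (auto simp: A_def)
      have q: "0 \<le> t / t'" "t / t' \<le> 1" using that t' t'' by auto
      have "(t / t') *\<^sub>R (t' *\<^sub>R w) \<in> D" by (rule star[OF t''(2) q])
      moreover have "(t / t') *\<^sub>R (t' *\<^sub>R w) = t *\<^sub>R w" using t'' by simp
      ultimately show ?thesis by metis
    qed
    define \<zeta> where "\<zeta> = t0 *\<^sub>R w"
    have zcl: "\<zeta> \<in> closure D" unfolding closure_approachable
    proof (intro allI impI)
      fix \<epsilon> :: real assume ep: "\<epsilon> > 0"
      define d where "d = min (1/2) (\<epsilon> / (2 * norm w))"
      have d: "0 < d" "d \<le> 1/2" "d * norm w < \<epsilon>" using ep nw by (auto simp: d_def min_def field_simps)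
      have "(t0 - d) *\<^sub>R w \<in> D" using below[of "t0 - d"] d t01 by simp
      moreover have "dist ((t0 - d) *\<^sub>R w) \<zeta> = d * norm w"
        using d by (simp add: \<zeta>_def dist_norm scaleR_diff_left[symmetric])
      ultimately show "\<exists>x\<in>D. dist x \<zeta> < \<epsilon>" using d(3) by (intro bexI[of _ "(t0 - d) *\<^sub>R w"]) auto
    qed
    have znD: "\<zeta> \<notin> D"
    proof
      assume "\<zeta> \<in> D"
      then obtain \<rho> where \<rho>: "\<rho> > 0" "ball \<zeta> \<rho> \<subseteq> D" using open_D open_contains_ball by blast
      define t where "t = t0 + \<rho> / (2 * norm w)"
      have "dist (t *\<^sub>R w) \<zeta> = \<rho> / 2"
        using nw \<rho> by (simp add: t_def \<zeta>_def dist_norm scaleR_diff_left[symmetric] algebra_simps)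
      hence "t *\<^sub>R w \<in> D" using \<rho> by (auto simp: dist_commute)
      hence "t \<in> A" using t01 \<rho> nw by (simp add: A_def t_def)
      hence "t \<le> t0" by (rule upper)
      moreover have "\<rho> / (2 * norm w) > 0" using \<rho> nw by simp
      ultimately show False by (simp add: t_def)
    qed
    have zF: "\<zeta> \<in> frontier D" using zcl znD by (simp add: frontier_D)
    have t0gt: "t0 > 1" using t01 znD wD by (cases "t0 = 1") (auto simp: \<zeta>_def)
    have uniq: "z = \<zeta>" if "z \<in> frontier D" "t > 0" "z = t *\<^sub>R w" for z t
    proof -
      have zn: "z \<notin> D" using that(1) by (simp add: frontier_D)
      have "\<not> t < t0" using below[of t] zn that by auto
      moreover have "\<not> t > t0"
      proof
        assume tt: "t > t0"
        define s where "s = min e ((t - t0) / (2 * t))"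
        have s: "0 < s" "s \<le> e" "s \<le> (t - t0) / (2 * t)" using tt e that t01 by (auto simp: s_def)
        have "(1 - s) *\<^sub>R z \<in> D" using cone[OF that(1) s(1,2), of "(1 - s) *\<^sub>R z"] s e by simp
        hence in1: "((1 - s) * t) *\<^sub>R w \<in> D" using that by simp
        have "s * t \<le> (t - t0) / 2" using s(3) that by (simp add: field_simps)
        hence gt: "(1 - s) * t > t0" using tt by (simp add: algebra_simps)
        hence "(1 - s) * t \<in> A" using in1 t01 by (simp add: A_def)
        thus False using upper gt by fastforce
      qed
      ultimately show ?thesis using that by (simp add: \<zeta>_def) 
    qed
    have rad: "radial_bdist D w = norm (\<zeta> - w)"
    proof -
      have "(THE z. z \<in> frontier D \<and> (\<exists>t>0. z = t *\<^sub>R w)) = \<zeta>"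
      proof (rule the_equality)
        show "\<zeta> \<in> frontier D \<and> (\<exists>t>0. \<zeta> = t *\<^sub>R w)" using zF t01 by (auto simp: \<zeta>_def intro!: exI[of _ t0])
        show "\<And>z. z \<in> frontier D \<and> (\<exists>t>0. z = t *\<^sub>R w) \<Longrightarrow> z = \<zeta>" using uniq by blast
      qed
      thus ?thesis by (simp add: radial_bdist_def)
    qed
    define s where "s = 1 - 1 / t0"
    have s: "0 < s" "s < 1" using t0gt by (auto simp: s_def field_simps)
    have ws: "w = (1 - s) *\<^sub>R \<zeta>" using t0gt by (simp add: s_def \<zeta>_def)
    have "\<zeta> - w = s *\<^sub>R \<zeta>" using ws by (simp add: algebra_simps)
    hence rs: "radial_bdist D w = s * norm \<zeta>" using rad s by simp
    have nz: "norm \<zeta> \<le> R" using R(2)[OF zcl] .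
    have fne: "frontier D \<noteq> {}" using zF by blast
    have bd0: "bdist D w \<ge> 0" unfolding bdist_def by (rule infdist_nonneg)
    show "radial_bdist D w \<le> C * bdist D w"
    proof (cases "s \<le> e")
      case True
      have "e * s \<le> bdist D w"
        by (rule bdist_ge[OF _ fne]) (use cone[OF zF s(1) True] ws in auto)
      hence "R / e * (e * s) \<le> R / e * bdist D w" using R e by (intro mult_left_mono) auto
      moreover have "radial_bdist D w \<le> R / e * (e * s)" using rs nz s e by (simp add: mult_right_mono mult.commute)
      moreover have "R / e * bdist D w \<le> C * bdist D w" using bd0 by (intro mult_right_mono) (auto simp: C_def)
      ultimately show ?thesis by linarith
    next
      case False
      have "m \<le> bdist D w"
        by (rule bdist_ge[OF _ fne]) (use dlow[OF zF _ s(2)] False ws in auto)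
      hence "R / m * m \<le> R / m * bdist D w" using R mpos by (intro mult_left_mono) auto
      moreover have "radial_bdist D w \<le> R"
      proof -
        have "s * norm \<zeta> \<le> 1 * R" using s nz by (intro mult_mono) auto
        thus ?thesis using rs by simp
      qed
      moreover have "R / m * m = R" using mpos by simp
      moreover have "R / m * bdist D w \<le> C * bdist D w" using bd0 by (intro mult_right_mono) (auto simp: C_def)
      ultimately show ?thesis by linarith
    qed
  qed
qed

end


theorem lemma3p4:
  fixes D :: "(complex ^ 'n) set" and N :: nat
    and Ds :: "nat \<Rightarrow> (complex ^ 'n) set" and r :: "nat \<Rightarrow> complex ^ 'n \<Rightarrow> real"
  assumes pw: "piecewise_smooth_domain D N Ds r"
    and circ: "complete_circular D"
    and transv: "\<And>\<zeta> F j. \<zeta> \<in> frontier D \<Longrightarrow> is_face D N Ds F \<Longrightarrow> \<zeta> \<in> closure F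
                   \<Longrightarrow> j < N \<Longrightarrow> F \<subseteq> frontier (Ds j)
                   \<Longrightarrow> frechet_derivative (r j) (at \<zeta>) \<zeta> \<noteq> 0"
  shows "\<exists>C>1. \<forall>w\<in>D. w \<noteq> 0 \<longrightarrow> radial_bdist D w \<le> C * bdist D w"
proof -
  have star: "t *\<^sub>R z \<in> D" if "z \<in> D" "0 \<le> t" "t \<le> 1" for z :: "complex ^ 'n" and t :: real
  proof -
    have "cmod (complex_of_real t) \<le> 1" using that by simp
    hence "complex_of_real t *s z \<in> D" using circ that(1) unfolding complete_circular_def by blast
    moreover have "complex_of_real t *s z = t *\<^sub>R z"
    proof (rule vec_eq_iff[THEN iffD2], rule allI)
      fix i
      have "(t *\<^sub>R z) $ i = t *\<^sub>R (z $ i)" by simp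
      also have "\<dots> = complex_of_real t * z $ i" by (rule scaleR_conv_of_real)
      finally show "(complex_of_real t *s z) $ i = (t *\<^sub>R z) $ i" by simp
    qed
    ultimately show ?thesis by simp
  qed
  interpret PW D N Ds r
    using pw star transv by unfold_locales auto
  show ?thesis by (rule main_PW)
qed

end
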